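(* If $G$ is a simple graph with no $K_5$-minor, then $G$ is $(4,1)$-choosable.
   Context: A $(k,d)$-list assignment for a graph $G$ assigns to each vertex $v$ a list $L(v)$ of at least $k$ colors such that $|L(x)\cap L(y)|\le d$ whenever $x$ and $y$ are adjacent. $G$ is $(k,d)$-choosable if for every $(k,d)$-list assignment $L$ there is a proper vertex coloring $\varphi$ of $G$ with $\varphi(v)\in L(v)$ for all $v$. *)

theory Defs
  imports Main
begin

definition simple_graph :: "'a set \<Rightarrow> ('a \<Rightarrow> 'a \<Rightarrow> bool) \<Rightarrow> bool" where
  "simple_graph V E \<longleftrightarrow> finite V \<and> (\<forall>x y. E x y \<longrightarrow> x \<in> V \<and> y \<in> V)
     \<and> (\<forall>x y. E x y \<longrightarrow> E y x) \<and> (\<forall>x. \<not> E x x)"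

definition connected_set :: "('a \<Rightarrow> 'a \<Rightarrow> bool) \<Rightarrow> 'a set \<Rightarrow> bool" where
  "connected_set E S \<longleftrightarrow>
     (\<forall>x\<in>S. \<forall>y\<in>S. (\<lambda>u v. E u v \<and> u \<in> S \<and> v \<in> S)\<^sup>*\<^sup>* x y)"

text \<open>G has a K_n minor iff there are n pairwise disjoint nonempty connected
branch sets, any two of which are joined by an edge.\<close>

definition has_complete_minor :: "'a set \<Rightarrow> ('a \<Rightarrow> 'a \<Rightarrow> bool) \<Rightarrow> nat \<Rightarrow> bool" where
  "has_complete_minor V E n \<longleftrightarrow>
     (\<exists>B :: nat \<Rightarrow> 'a set.
        (\<forall>i<n. B i \<noteq> {} \<and> B i \<subseteq> V \<and> connected_set E (B i)) \<and>
        (\<forall>i<n. \<forall>j<n. i \<noteq> j \<longrightarrow> B i \<inter> B j = {} \<and> (\<exists>x\<in>B i. \<exists>y\<in>B j. E x y)))"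

definition kd_list_assignment ::
  "'a set \<Rightarrow> ('a \<Rightarrow> 'a \<Rightarrow> bool) \<Rightarrow> nat \<Rightarrow> nat \<Rightarrow> ('a \<Rightarrow> 'c set) \<Rightarrow> bool" where
  "kd_list_assignment V E k d L \<longleftrightarrow>
     (\<forall>v\<in>V. finite (L v) \<and> k \<le> card (L v)) \<and>
     (\<forall>x\<in>V. \<forall>y\<in>V. E x y \<longrightarrow> card (L x \<inter> L y) \<le> d)"

definition proper_L_colouring ::
  "'a set \<Rightarrow> ('a \<Rightarrow> 'a \<Rightarrow> bool) \<Rightarrow> ('a \<Rightarrow> 'c set) \<Rightarrow> ('a \<Rightarrow> 'c) \<Rightarrow> bool" where
  "proper_L_colouring V E L \<phi> \<longleftrightarrow>
     (\<forall>v\<in>V. \<phi> v \<in> L v) \<and> (\<forall>x\<in>V. \<forall>y\<in>V. E x y \<longrightarrow> \<phi> x \<noteq> \<phi> y)"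

definition kd_choosable ::
  "'a set \<Rightarrow> ('a \<Rightarrow> 'a \<Rightarrow> bool) \<Rightarrow> nat \<Rightarrow> nat \<Rightarrow> 'c itself \<Rightarrow> bool" where
  "kd_choosable V E k d (_ :: 'c itself) \<longleftrightarrow>
     (\<forall>L :: 'a \<Rightarrow> 'c set. kd_list_assignment V E k d L \<longrightarrow>
        (\<exists>\<phi>. proper_L_colouring V E L \<phi>))"

end

theory Submission
  imports Defs
begin


definition orient :: "('a \<Rightarrow> 'a \<Rightarrow> bool) \<Rightarrow> ('a \<Rightarrow> 'a \<Rightarrow> bool) \<Rightarrow> bool" where
  "orient E D \<longleftrightarrow> (\<forall>x y. D x y \<longrightarrow> E x y) \<and> (\<forall>x y. E x y \<longrightarrow> D x y \<or> D y x)
     \<and> (\<forall>x y. D x y \<longrightarrow> \<not> D y x)"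

lemma colour_from_orient:
  assumes sg: "simple_graph V E" and o: "orient E D"
    and out: "\<forall>v\<in>V. card {y. D v y} \<le> 3" and L: "kd_list_assignment V E 4 1 L"
  shows "\<exists>\<phi>. proper_L_colouring V E L \<phi>"
proof -
  have DE: "D u v \<Longrightarrow> E u v" for u v using o by (auto simp: orient_def)
  have EV: "E u v \<Longrightarrow> u \<in> V \<and> v \<in> V" for u v using sg by (auto simp: simple_graph_def)
  have fin: "finite {y. D v y}" for v
  proof -
    have "{y. D v y} \<subseteq> V" using DE EV by blast
    then show ?thesis using sg finite_subset by (auto simp: simple_graph_def)
  qed
  define F where "F v = (\<Union>y\<in>{y. D v y}. L v \<inter> L y)" for v
  have ex: "\<exists>c. c \<in> L v - F v" if vV: "v \<in> V" for v
  proof -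
    have "card (F v) \<le> (\<Sum>y\<in>{y. D v y}. card (L v \<inter> L y))"
      unfolding F_def by (rule card_UN_le[OF fin])
    also have "\<dots> \<le> (\<Sum>y\<in>{y. D v y}. 1)"
    proof (rule sum_mono)
      fix y assume "y \<in> {y. D v y}"
      then have "E v y" using DE by auto
      then show "card (L v \<inter> L y) \<le> 1" using L EV vV by (auto simp: kd_list_assignment_def)
    qed
    also have "\<dots> = card {y. D v y}" by simp
    finally have cF0: "card (F v) \<le> card {y. D v y}" .
    have "card {y. D v y} \<le> 3" using out vV by auto
    then have cF: "card (F v) \<le> 3" using cF0 by linarith
    have fL: "finite (L v)" and cL: "4 \<le> card (L v)" using L vV by (auto simp: kd_list_assignment_def)
    have "finite (F v)" unfolding F_def using fin fL by auto
    then have "card (L v) - card (F v) \<le> card (L v - F v)" by (rule diff_card_le_card_Diff)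
    then have "card (L v - F v) > 0" using cF cL by linarith
    then show ?thesis by (metis card.empty ex_in_conv less_irrefl)
  qed
  define \<phi> where "\<phi> v = (SOME c. c \<in> L v - F v)" for v
  have ph: "\<phi> v \<in> L v - F v" if "v \<in> V" for v
    unfolding \<phi>_def using ex[OF that] by (rule someI_ex)
  show ?thesis
  proof (intro exI conjI)
    show "proper_L_colouring V E L \<phi>"
      unfolding proper_L_colouring_def
    proof (intro conjI ballI impI)
      fix v assume "v \<in> V" then show "\<phi> v \<in> L v" using ph by auto
    next
      fix x y assume xV: "x \<in> V" and yV: "y \<in> V" and exy: "E x y"
      show "\<phi> x \<noteq> \<phi> y"
      proof
        assume eq: "\<phi> x = \<phi> y"
        from exy o have "D x y \<or> D y x" by (auto simp: orient_def)
        then show False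
        proof
          assume "D x y"
          then have "L x \<inter> L y \<subseteq> F x" unfolding F_def by auto
          then show False using ph[OF xV] ph[OF yV] eq by auto
        next
          assume "D y x"
          then have "L y \<inter> L x \<subseteq> F y" unfolding F_def by auto
          then show False using ph[OF xV] ph[OF yV] eq by auto
        qed
      qed
    qed
  qed
qed

lemma flip1:
  assumes o: "orient E D" and sy: "symp E" and ab: "D a b"
    and D1_def: "D1 = (\<lambda>u v. (D u v \<and> (u,v) \<noteq> (a,b)) \<or> (u,v) = (b,a))"
  shows "orient E D1" "{y. D1 a y} = {y. D a y} - {b}" "{y. D1 b y} = insert a {y. D b y}"
    "a \<notin> {y. D b y}" "b \<in> {y. D a y}" "\<And>v. v \<noteq> a \<Longrightarrow> v \<noteq> b \<Longrightarrow> {y. D1 v y} = {y. D v y}"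
proof -
  have nba: "\<not> D b a" using o ab by (auto simp: orient_def)
  then have anb: "a \<noteq> b" using ab by auto
  show "orient E D1" using o sy ab nba unfolding orient_def D1_def symp_def by blast
  show "{y. D1 a y} = {y. D a y} - {b}" using anb unfolding D1_def by auto
  show "{y. D1 b y} = insert a {y. D b y}" using anb unfolding D1_def by auto
  show "a \<notin> {y. D b y}" using nba by auto
  show "b \<in> {y. D a y}" using ab by auto
  show "\<And>v. v \<noteq> a \<Longrightarrow> v \<noteq> b \<Longrightarrow> {y. D1 v y} = {y. D v y}" unfolding D1_def by auto
qed

fun flipp :: "('a \<Rightarrow> 'a \<Rightarrow> bool) \<Rightarrow> 'a list \<Rightarrow> ('a \<Rightarrow> 'a \<Rightarrow> bool)" where
  "flipp D (a # b # rest) = flipp (\<lambda>u v. (D u v \<and> (u,v) \<noteq> (a,b)) \<or> (u,v) = (b,a)) (b # rest)"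
| "flipp D _ = D"

lemma flip_path:
  assumes "orient E D" "symp E" "\<forall>v. finite {y. D v y}"
    "distinct (a # xs)" "successively D (a # xs)" "xs \<noteq> []"
  shows "orient E (flipp D (a # xs)) \<and> (\<forall>v. finite {y. flipp D (a # xs) v y})
    \<and> card {y. flipp D (a # xs) a y} + 1 = card {y. D a y}
    \<and> card {y. flipp D (a # xs) (last xs) y} = card {y. D (last xs) y} + 1
    \<and> (\<forall>v. v \<noteq> a \<longrightarrow> v \<noteq> last xs \<longrightarrow> card {y. flipp D (a # xs) v y} = card {y. D v y})"
  using assms
proof (induction xs arbitrary: a D)
  case Nil
  then show ?case by simp
next
  case (Cons b rest)
  define D1 where "D1 = (\<lambda>u v. (D u v \<and> (u,v) \<noteq> (a,b)) \<or> (u,v) = (b,a))"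
  have ab: "D a b" using Cons.prems by simp
  note f = flip1[OF Cons.prems(1) Cons.prems(2) ab D1_def]
  have fin1: "\<forall>v. finite {y. D1 v y}"
  proof
    fix v
    have "{y. D1 v y} \<subseteq> insert a {y. D v y}" unfolding D1_def by auto
    then show "finite {y. D1 v y}"
      using Cons.prems(3) finite_subset by auto
  qed
  have ca: "card {y. D1 a y} + 1 = card {y. D a y}"
  proof -
    have "card {y. D1 a y} = card {y. D a y} - 1" using f(2) f(5) Cons.prems(3) by (simp add: card_Diff_singleton)
    moreover have "card {y. D a y} > 0" using f(5) Cons.prems(3) card_gt_0_iff by blast
    ultimately show ?thesis by linarith
  qed
  have cb: "card {y. D1 b y} = card {y. D b y} + 1"
    using f(3) f(4) Cons.prems(3) by simp
  have eqF: "flipp D (a # b # rest) = flipp D1 (b # rest)" by (simp add: D1_def)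
  show ?case
  proof (cases "rest = []")
    case True
    then show ?thesis using eqF f fin1 ca cb by simp
  next
    case False
    have anot: "a \<notin> set (b # rest)" using Cons.prems(4) by simp
    have suc1: "successively D1 (b # rest)"
    proof (rule successively_mono)
      show "successively D (b # rest)" using Cons.prems(5) by simp
      fix u v assume "u \<in> set (b # rest)" "v \<in> set (b # rest)" "D u v"
      then show "D1 u v" using anot unfolding D1_def by auto
    qed
    have IH: "orient E (flipp D1 (b # rest)) \<and> (\<forall>v. finite {y. flipp D1 (b # rest) v y})
      \<and> card {y. flipp D1 (b # rest) b y} + 1 = card {y. D1 b y}
      \<and> card {y. flipp D1 (b # rest) (last rest) y} = card {y. D1 (last rest) y} + 1
      \<and> (\<forall>v. v \<noteq> b \<longrightarrow> v \<noteq> last rest \<longrightarrow> card {y. flipp D1 (b # rest) v y} = card {y. D1 v y})"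
      using Cons.IH[OF f(1) Cons.prems(2) fin1 _ suc1 False] Cons.prems(4) by simp
    have lr: "last rest \<in> set rest" using False by simp
    have lna: "last rest \<noteq> a" using lr Cons.prems(4) by auto
    have lnb: "last rest \<noteq> b" using lr Cons.prems(4) by auto
    have anb: "a \<noteq> b" using Cons.prems(4) by auto
    have last_eq: "last (b # rest) = last rest" using False by simp
    show ?thesis
      unfolding eqF last_eq
    proof (intro conjI allI impI)
      show "orient E (flipp D1 (b # rest))" using IH by simp
      show "\<And>v. finite {y. flipp D1 (b # rest) v y}" using IH by simp
      show "card {y. flipp D1 (b # rest) a y} + 1 = card {y. D a y}"
        using IH anb lna ca by auto
      show "card {y. flipp D1 (b # rest) (last rest) y} = card {y. D (last rest) y} + 1"
        using IH f(6)[of "last rest"] lna lnb by simp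
      fix v assume "v \<noteq> a" "v \<noteq> last rest"
      then show "card {y. flipp D1 (b # rest) v y} = card {y. D v y}"
        using IH f(6) cb by (cases "v = b") auto
    qed
  qed
qed

lemma rtranclp_distinct_path:
  "D\<^sup>*\<^sup>* u w \<Longrightarrow> \<exists>xs. xs \<noteq> [] \<and> hd xs = u \<and> last xs = w \<and> distinct xs \<and> successively D xs"
proof (induction rule: rtranclp_induct)
  case base
  then show ?case by (intro exI[of _ "[u]"]) simp
next
  case (step y z)
  then obtain xs where xs: "xs \<noteq> []" "hd xs = u" "last xs = y" "distinct xs" "successively D xs" by blast
  show ?case
  proof (cases "z \<in> set xs")
    case True
    then obtain as bs where sp: "xs = as @ z # bs" by (meson split_list)
    have s1: "successively D as" and s2: "as = [] \<or> D (last as) z"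
      using xs(5) unfolding sp successively_append_iff by (auto simp: successively_Cons)
    show ?thesis
      using xs s1 s2 unfolding sp
      by (intro exI[of _ "as @ [z]"]) (auto simp: successively_append_iff hd_append split: if_splits)
  next
    case False
    show ?thesis
      using xs False step.hyps(2)
      by (intro exI[of _ "xs @ [z]"]) (auto simp: successively_append_iff hd_append)
  qed
qed



lemma hakimi:
  fixes k :: nat
  assumes "simple_graph V E"
    and "\<forall>S\<subseteq>V. card {(a,b). a\<in>S \<and> b\<in>S \<and> E a b} \<le> 2*k*card S"
  shows "\<exists>D. orient E D \<and> (\<forall>v. card {y. D v y} \<le> k)"
  using assms
proof (induction "card {(a,b). E a b}" arbitrary: E rule: less_induct)
  case less
  have EV: "E u v \<Longrightarrow> u \<in> V \<and> v \<in> V" for u v using less.prems(1) by (auto simp: simple_graph_def)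
  have sym: "E u v \<Longrightarrow> E v u" for u v using less.prems(1) by (auto simp: simple_graph_def)
  have irr: "\<not> E u u" for u using less.prems(1) by (auto simp: simple_graph_def)
  have finV: "finite V" using less.prems(1) by (auto simp: simple_graph_def)
  have fin: "finite {(a,b). E a b}"
    by (rule finite_subset[of _ "V \<times> V"]) (use EV finV in auto)
  show ?case
  proof (cases "\<exists>x y. E x y")
    case False
    then show ?thesis by (intro exI[of _ "\<lambda>_ _. False"]) (auto simp: orient_def)
  next
    case True
    then obtain x y where exy: "E x y" by blast
    define E' where "E' = (\<lambda>u v. E u v \<and> (u,v) \<noteq> (x,y) \<and> (u,v) \<noteq> (y,x))"
    have sg': "simple_graph V E'"
      using less.prems(1) unfolding simple_graph_def E'_def by auto
    have lt: "card {(a,b). E' a b} < card {(a,b). E a b}"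
    proof (rule psubset_card_mono[OF fin])
      show "{(a,b). E' a b} \<subset> {(a,b). E a b}" using exy unfolding E'_def by auto
    qed
    have sp': "\<forall>S\<subseteq>V. card {(a,b). a\<in>S \<and> b\<in>S \<and> E' a b} \<le> 2*k*card S"
    proof (intro allI impI)
      fix S assume SV: "S \<subseteq> V"
      have "card {(a,b). a\<in>S \<and> b\<in>S \<and> E' a b} \<le> card {(a,b). a\<in>S \<and> b\<in>S \<and> E a b}"
        by (rule card_mono) (auto intro: finite_subset[OF _ fin] simp: E'_def)
      also have "\<dots> \<le> 2*k*card S" using less.prems(2) SV by auto
      finally show "card {(a,b). a\<in>S \<and> b\<in>S \<and> E' a b} \<le> 2*k*card S" .
    qed
    obtain D' where o': "orient E' D'" and out': "\<forall>v. card {y. D' v y} \<le> k"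
      using less.hyps[OF lt sg' sp'] by blast
    define D1 where "D1 = (\<lambda>u v. D' u v \<or> (u,v) = (x,y))"
    have o1: "orient E D1" unfolding orient_def
    proof (intro conjI allI impI)
      fix u v assume "D1 u v" then show "E u v"
        using o' exy unfolding D1_def orient_def E'_def by auto
    next
      fix u v assume "E u v" then show "D1 u v \<or> D1 v u"
        using o' unfolding D1_def orient_def E'_def by auto
    next
      fix u v assume "D1 u v" then show "\<not> D1 v u"
        using o' irr[of x] exy unfolding D1_def orient_def E'_def by auto
    qed
    have D1E: "D1 u v \<Longrightarrow> E u v" for u v using o1 by (auto simp: orient_def)
    have finD: "\<forall>v. finite {z. D1 v z}"
    proof
      fix v show "finite {z. D1 v z}"
        by (rule finite_subset[of _ V]) (use D1E EV finV in auto)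
    qed
    have nxy: "\<not> D' x y" using o' unfolding orient_def E'_def by blast
    have finD': "finite {z. D' v z}" for v
      by (rule finite_subset[of _ V]) (use o' EV finV in \<open>auto simp: orient_def E'_def\<close>)
    have out1x: "card {z. D1 x z} = card {z. D' x z} + 1"
    proof -
      have "{z. D1 x z} = insert y {z. D' x z}" unfolding D1_def by auto
      then show ?thesis using nxy finD' by simp
    qed
    have out1v: "v \<noteq> x \<Longrightarrow> {z. D1 v z} = {z. D' v z}" for v unfolding D1_def by auto
    show ?thesis
    proof (cases "card {z. D' x z} < k")
      case True
      show ?thesis
      proof (intro exI conjI allI)
        show "orient E D1" by (rule o1)
        fix v show "card {y. D1 v y} \<le> k"
          using True out1x out1v out' by (cases "v = x") auto
      qed
    next
      case False
      then have cx: "card {z. D1 x z} = k + 1" using out' out1x by (metis le_antisym not_less)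
      define R where "R = {v. D1\<^sup>*\<^sup>* x v}"
      have xR: "x \<in> R" unfolding R_def by simp
      show ?thesis
      proof (cases "\<exists>w\<in>R. card {z. D1 w z} < k")
        case True
        then obtain w where wR: "w \<in> R" and wlt: "card {z. D1 w z} < k" by blast
        have wx: "w \<noteq> x" using wlt cx by auto
        obtain xs where xs: "xs \<noteq> []" "hd xs = x" "last xs = w" "distinct xs" "successively D1 xs"
          using rtranclp_distinct_path[of D1 x w] wR unfolding R_def by blast
        then obtain ys where xs_eq: "xs = x # ys" by (cases xs) auto
        have ys: "ys \<noteq> []" using xs xs_eq wx by auto
        have lw: "last ys = w" using xs xs_eq ys by simp
        have sy: "symp E" using sym by (intro sympI)
        note fp = flip_path[OF o1 sy finD, of x ys, folded xs_eq, OF xs(4) xs(5) ys]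
        show ?thesis
        proof (intro exI conjI allI)
          show "orient E (flipp D1 xs)" using fp by simp
          fix v show "card {y. flipp D1 xs v y} \<le> k"
          proof (cases "v = x")
            case True then show ?thesis using fp cx by simp
          next
            case False
            show ?thesis
            proof (cases "v = w")
              case True then show ?thesis using fp lw wlt by simp
            next
              case False
              then show ?thesis using fp lw \<open>v \<noteq> x\<close> out1v out' by simp
            qed
          qed
        qed
      next
        case False
        then have geR: "\<forall>v\<in>R. k \<le> card {z. D1 v z}" by auto
        have RV: "R \<subseteq> V"
        proof
          fix v assume "v \<in> R"
          then have "D1\<^sup>*\<^sup>* x v" unfolding R_def by simp
          then show "v \<in> V"
            by (induction rule: rtranclp_induct) (use EV exy D1E in auto)
        qed
        have finR: "finite R" using RV finV finite_subset by auto
        have clo: "a \<in> R \<Longrightarrow> D1 a b \<Longrightarrow> b \<in> R" for a b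
          unfolding R_def by auto
        define A where "A = Sigma R (\<lambda>a. {b. D1 a b})"
        define Arc where "Arc = {(a,b). a\<in>R \<and> b\<in>R \<and> E a b}"
        have A1: "A \<subseteq> Arc" unfolding A_def Arc_def using clo D1E by auto
        have A2: "prod.swap ` A \<subseteq> Arc" unfolding A_def Arc_def using clo D1E sym by auto
        have A3: "A \<inter> prod.swap ` A = {}" unfolding A_def using o1 by (auto simp: orient_def)
        have cs: "card (prod.swap ` A) = card A" by (rule card_image) simp
        have finArc: "finite Arc" unfolding Arc_def
          by (rule finite_subset[OF _ fin]) auto
        have finA: "finite A" using A1 finArc finite_subset by auto
        have "card A + card A = card (A \<union> prod.swap ` A)"
          using card_Un_disjoint[OF finA _ A3] finA cs by simp
        also have "\<dots> \<le> card Arc" using A1 A2 finArc by (intro card_mono) auto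
        finally have c1: "card A + card A \<le> card Arc" .
        have "card A = (\<Sum>a\<in>R. card {b. D1 a b})"
          unfolding A_def using finR finD by simp
        also have "\<dots> \<ge> (\<Sum>a\<in>R. k + (if a = x then 1 else 0))"
          using geR cx by (intro sum_mono) auto
        finally have c2: "card A \<ge> k * card R + 1"
          using finR xR by (simp add: sum.distrib mult.commute)
        have "card Arc \<le> 2*k*card R" using less.prems(2) RV unfolding Arc_def by auto
        then show ?thesis using c1 c2 by linarith
      qed
    qed
  qed
qed

lemma sparse_choosable:
  assumes sg: "simple_graph V E"
    and sp: "\<forall>S\<subseteq>V. card {(a,b). a\<in>S \<and> b\<in>S \<and> E a b} \<le> 6 * card S"
  shows "kd_choosable V E 4 1 TYPE('c)"
proof -
  obtain D where o: "orient E D" and out: "\<forall>v. card {y. D v y} \<le> 3"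
    using hakimi[of V E 3] sg sp by auto
  show ?thesis unfolding kd_choosable_def
    using colour_from_orient[OF sg o] out by auto
qed



definition arcs :: "'a set \<Rightarrow> ('a \<Rightarrow> 'a \<Rightarrow> bool) \<Rightarrow> ('a \<times> 'a) set" where
  "arcs V E = {(a,b). a \<in> V \<and> b \<in> V \<and> E a b}"
definition nb :: "'a set \<Rightarrow> ('a \<Rightarrow> 'a \<Rightarrow> bool) \<Rightarrow> 'a \<Rightarrow> 'a set" where
  "nb V E v = {y \<in> V. E v y}"
definition ind :: "('a \<Rightarrow> 'a \<Rightarrow> bool) \<Rightarrow> 'a set \<Rightarrow> 'a \<Rightarrow> 'a \<Rightarrow> bool" where
  "ind E S = (\<lambda>u v. E u v \<and> u \<in> S \<and> v \<in> S)"
definition delv :: "('a \<Rightarrow> 'a \<Rightarrow> bool) \<Rightarrow> 'a \<Rightarrow> 'a \<Rightarrow> 'a \<Rightarrow> bool" where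
  "delv E x = (\<lambda>u v. E u v \<and> u \<noteq> x \<and> v \<noteq> x)"
definition dele :: "('a \<Rightarrow> 'a \<Rightarrow> bool) \<Rightarrow> 'a \<Rightarrow> 'a \<Rightarrow> 'a \<Rightarrow> 'a \<Rightarrow> bool" where
  "dele E x y = (\<lambda>u v. E u v \<and> (u,v) \<noteq> (x,y) \<and> (u,v) \<noteq> (y,x))"
definition contr :: "'a set \<Rightarrow> ('a \<Rightarrow> 'a \<Rightarrow> bool) \<Rightarrow> 'a \<Rightarrow> 'a \<Rightarrow> 'a \<Rightarrow> 'a \<Rightarrow> bool" where
  "contr V E x y = (\<lambda>u v. u \<in> V - {y} \<and> v \<in> V - {y} \<and> u \<noteq> v \<and>
      (E u v \<or> (u = x \<and> E y v) \<or> (v = x \<and> E u y)))"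

lemma sg_facts:
  assumes "simple_graph V E"
  shows "finite V" "E u v \<Longrightarrow> u \<in> V" "E u v \<Longrightarrow> v \<in> V" "E u v \<Longrightarrow> E v u" "\<not> E u u"
  using assms by (auto simp: simple_graph_def)

lemma connected_mono:
  assumes "connected_set E' S" "\<And>u v. E' u v \<Longrightarrow> u \<in> S \<Longrightarrow> v \<in> S \<Longrightarrow> E u v"
  shows "connected_set E S"
proof -
  have "(\<lambda>u v. E' u v \<and> u \<in> S \<and> v \<in> S) \<le> (\<lambda>u v. E u v \<and> u \<in> S \<and> v \<in> S)"
    using assms(2) by auto
  then have "(\<lambda>u v. E' u v \<and> u \<in> S \<and> v \<in> S)\<^sup>*\<^sup>* \<le> (\<lambda>u v. E u v \<and> u \<in> S \<and> v \<in> S)\<^sup>*\<^sup>*"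
    by (rule rtranclp_mono)
  then show ?thesis using assms(1) unfolding connected_set_def by blast
qed

lemma minor_mono:
  assumes "has_complete_minor V' E' n" "V' \<subseteq> V" "\<And>u v. E' u v \<Longrightarrow> E u v"
  shows "has_complete_minor V E n"
proof -
  obtain B where B: "\<forall>i<n. B i \<noteq> {} \<and> B i \<subseteq> V' \<and> connected_set E' (B i)"
    "\<forall>i<n. \<forall>j<n. i \<noteq> j \<longrightarrow> B i \<inter> B j = {} \<and> (\<exists>x\<in>B i. \<exists>y\<in>B j. E' x y)"
    using assms(1) unfolding has_complete_minor_def by blast
  have "\<forall>i<n. B i \<noteq> {} \<and> B i \<subseteq> V \<and> connected_set E (B i)"
  proof (intro allI impI conjI)
    fix i assume "i < n"
    then show "B i \<noteq> {}" "B i \<subseteq> V" using B(1) assms(2) by auto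
    show "connected_set E (B i)"
      by (rule connected_mono[of E']) (use B(1) \<open>i < n\<close> assms(3) in auto)
  qed
  moreover have "\<forall>i<n. \<forall>j<n. i \<noteq> j \<longrightarrow> B i \<inter> B j = {} \<and> (\<exists>x\<in>B i. \<exists>y\<in>B j. E x y)"
    using B(2) assms(3) by blast
  ultimately show ?thesis unfolding has_complete_minor_def by blast
qed

lemma connected_single: "connected_set E {v}"
  unfolding connected_set_def by auto

lemma clique_minor:
  assumes "distinct vs" "set vs \<subseteq> V"
    "\<And>i j. i < length vs \<Longrightarrow> j < length vs \<Longrightarrow> i \<noteq> j \<Longrightarrow> E (vs ! i) (vs ! j)"
  shows "has_complete_minor V E (length vs)"
  unfolding has_complete_minor_def
proof (intro exI[of _ "\<lambda>i. {vs ! i}"] conjI allI impI)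
  fix i assume "i < length vs"
  then show "{vs ! i} \<noteq> {}" "{vs ! i} \<subseteq> V" "connected_set E {vs ! i}"
    using assms(2) connected_single by auto
next
  fix i j assume "i < length vs" "j < length vs" "i \<noteq> j"
  moreover have "vs ! i \<noteq> vs ! j"
    using assms(1) calculation by (simp add: distinct_conv_nth)
  ultimately show "{vs ! i} \<inter> {vs ! j} = {}" "\<exists>x\<in>{vs ! i}. \<exists>y\<in>{vs ! j}. E x y"
    using assms(3) by auto
qed

lemma cone_minor:
  assumes sg: "simple_graph V E" and xV: "x \<in> V"
    and H: "has_complete_minor (nb V E x) (ind E (nb V E x)) n"
  shows "has_complete_minor V E (Suc n)"
proof -
  let ?N = "nb V E x"
  obtain B where B: "\<forall>i<n. B i \<noteq> {} \<and> B i \<subseteq> ?N \<and> connected_set (ind E ?N) (B i)"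
    "\<forall>i<n. \<forall>j<n. i \<noteq> j \<longrightarrow> B i \<inter> B j = {} \<and> (\<exists>a\<in>B i. \<exists>b\<in>B j. ind E ?N a b)"
    using H unfolding has_complete_minor_def by blast
  have NV: "?N \<subseteq> V" and xN: "x \<notin> ?N" using sg_facts[OF sg] unfolding nb_def by auto
  define B' where "B' = B(n := {x})"
  show ?thesis unfolding has_complete_minor_def
  proof (intro exI[of _ B'] conjI allI impI)
    fix i assume i: "i < Suc n"
    show "B' i \<noteq> {}" using B(1) i unfolding B'_def by (cases "i = n") auto
    show "B' i \<subseteq> V"
    proof (cases "i = n")
      case True then show ?thesis using xV unfolding B'_def by auto
    next
      case False then have "B i \<subseteq> ?N" using B(1) i by auto
      then show ?thesis using NV False unfolding B'_def by auto
    qed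
    show "connected_set E (B' i)"
    proof (cases "i = n")
      case True then show ?thesis unfolding B'_def by (simp add: connected_single)
    next
      case False
      then have "connected_set (ind E ?N) (B i)" using B(1) i by auto
      then have "connected_set E (B i)"
        by (rule connected_mono) (simp add: ind_def)
      moreover have "B' i = B i" using False by (simp add: B'_def)
      ultimately show ?thesis by simp
    qed
  next
    fix i j assume i: "i < Suc n" and j: "j < Suc n" and ij: "i \<noteq> j"
    have adj: "\<exists>a\<in>B k. \<exists>b\<in>{x}. E a b" "\<exists>a\<in>{x}. \<exists>b\<in>B k. E a b" if "k < n" for k
    proof -
      obtain a where "a \<in> B k" using B(1) \<open>k < n\<close> by blast
      moreover have "a \<in> ?N" using calculation B(1) \<open>k < n\<close> by blast
      ultimately show "\<exists>a\<in>B k. \<exists>b\<in>{x}. E a b" "\<exists>a\<in>{x}. \<exists>b\<in>B k. E a b"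
        using sg_facts(4)[OF sg] unfolding nb_def by auto
    qed
    have dis: "B k \<inter> {x} = {}" if "k < n" for k using B(1) that xN by blast
    show "B' i \<inter> B' j = {}"
    proof (cases "i = n")
      case True
      then have "j < n" using j ij by auto
      then show ?thesis using dis True ij unfolding B'_def by auto
    next
      case False
      then have "i < n" using i by auto
      show ?thesis
      proof (cases "j = n")
        case True then show ?thesis using dis \<open>i < n\<close> ij unfolding B'_def by auto
      next
        case False
        then have "j < n" using j by auto
        then show ?thesis using B(2) \<open>i < n\<close> ij \<open>i \<noteq> n\<close> False unfolding B'_def by auto
      qed
    qed
    show "\<exists>a\<in>B' i. \<exists>b\<in>B' j. E a b"
    proof (cases "i = n")
      case True
      then have "j < n" using j ij by auto
      then show ?thesis using adj True ij unfolding B'_def by auto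
    next
      case False
      then have "i < n" using i by auto
      show ?thesis
      proof (cases "j = n")
        case True then show ?thesis using adj \<open>i < n\<close> ij unfolding B'_def by auto
      next
        case False
        then have "j < n" using j by auto
        have "\<exists>a\<in>B i. \<exists>b\<in>B j. ind E ?N a b" using B(2) \<open>i < n\<close> \<open>j < n\<close> ij by blast
        then show ?thesis using \<open>i \<noteq> n\<close> False unfolding B'_def
          by (auto simp: ind_def)
      qed
    qed
  qed
qed



lemma card_arcs_sum:
  assumes sg: "simple_graph V E"
  shows "card (arcs V E) = (\<Sum>v\<in>V. card (nb V E v))"
proof -
  have "arcs V E = Sigma V (nb V E)" unfolding arcs_def nb_def by auto
  moreover have "finite V" using sg_facts[OF sg] by simp
  moreover have "\<forall>v\<in>V. finite (nb V E v)" using calculation(2) unfolding nb_def by auto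
  ultimately show ?thesis by simp
qed

lemma finite_arcs: "simple_graph V E \<Longrightarrow> finite (arcs V E)"
  unfolding arcs_def
  by (rule finite_subset[of _ "V \<times> V"]) (auto dest: sg_facts(1))

lemma finite_nb: "simple_graph V E \<Longrightarrow> finite (nb V E v)"
  unfolding nb_def by (auto dest: sg_facts(1))

lemma arcs_le_sq:
  assumes sg: "simple_graph V E"
  shows "card (arcs V E) \<le> card V * (card V - 1)"
proof -
  have "card (nb V E v) \<le> card V - 1" if "v \<in> V" for v
  proof -
    have "nb V E v \<subseteq> V - {v}" using sg_facts(5)[OF sg] unfolding nb_def by auto
    then have "card (nb V E v) \<le> card (V - {v})"
      using sg_facts(1)[OF sg] by (intro card_mono) auto
    then show ?thesis using that sg_facts(1)[OF sg] by simp
  qed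
  then have "(\<Sum>v\<in>V. card (nb V E v)) \<le> (\<Sum>v\<in>V. card V - 1)" by (intro sum_mono) auto
  then show ?thesis using card_arcs_sum[OF sg] by simp
qed

lemma sg_ind: "simple_graph V E \<Longrightarrow> S \<subseteq> V \<Longrightarrow> simple_graph S (ind E S)"
  unfolding simple_graph_def ind_def by (auto intro: finite_subset)

lemma del_edge:
  assumes sg: "simple_graph V E" and e: "E x y"
  shows "simple_graph V (dele E x y)" "card (arcs V (dele E x y)) + 2 = card (arcs V E)"
proof -
  show "simple_graph V (dele E x y)" using sg unfolding simple_graph_def dele_def by auto
  have xy: "x \<noteq> y" using sg_facts(5)[OF sg] e by auto
  have xV: "x \<in> V" "y \<in> V" using sg_facts(2,3)[OF sg e] by auto
  have eq: "arcs V (dele E x y) = arcs V E - {(x,y),(y,x)}" unfolding arcs_def dele_def by auto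
  have sub: "{(x,y),(y,x)} \<subseteq> arcs V E" using e sg_facts(4)[OF sg e] xV unfolding arcs_def by auto
  have "card (arcs V E - {(x,y),(y,x)}) = card (arcs V E) - card {(x,y),(y,x)}"
    using sub finite_arcs[OF sg] by (intro card_Diff_subset) (auto intro: finite_subset)
  moreover have "card {(x,y),(y,x)} = 2" using xy by simp
  moreover have "card (arcs V E) \<ge> 2" using card_mono[OF finite_arcs[OF sg] sub] xy by simp
  ultimately show "card (arcs V (dele E x y)) + 2 = card (arcs V E)" using eq by simp
qed

lemma del_vertex:
  assumes sg: "simple_graph V E" and xV: "x \<in> V"
  shows "simple_graph (V - {x}) (delv E x)"
    "card (arcs V E) \<le> card (arcs (V - {x}) (delv E x)) + 2 * card (nb V E x)"
    "card (V - {x}) + 1 = card V"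
proof -
  show sgd: "simple_graph (V - {x}) (delv E x)" using sg unfolding simple_graph_def delv_def by auto
  have "arcs V E \<subseteq> arcs (V - {x}) (delv E x) \<union> ({x} \<times> nb V E x \<union> nb V E x \<times> {x})"
    using sg_facts(4)[OF sg] unfolding arcs_def delv_def nb_def by auto
  then have "card (arcs V E) \<le> card (arcs (V - {x}) (delv E x) \<union> ({x} \<times> nb V E x \<union> nb V E x \<times> {x}))"
    using finite_arcs[OF sgd] finite_nb[OF sg] sg_facts(1)[OF sg]
    by (intro card_mono) auto
  also have "\<dots> \<le> card (arcs (V - {x}) (delv E x)) + card ({x} \<times> nb V E x \<union> nb V E x \<times> {x})"
    by (rule card_Un_le)
  also have "card ({x} \<times> nb V E x \<union> nb V E x \<times> {x}) \<le> card ({x} \<times> nb V E x) + card (nb V E x \<times> {x})"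
    by (rule card_Un_le)
  finally show "card (arcs V E) \<le> card (arcs (V - {x}) (delv E x)) + 2 * card (nb V E x)"
    by (simp add: card_cartesian_product)
  show "card (V - {x}) + 1 = card V" using xV sg_facts(1)[OF sg]
    using card_Suc_Diff1[OF sg_facts(1)[OF sg] xV] by simp
qed

lemma contract:
  assumes sg: "simple_graph V E" and e: "E x y"
  shows "simple_graph (V - {y}) (contr V E x y)"
    "card (arcs V E) \<le> card (arcs (V - {y}) (contr V E x y)) + 2 + 2 * card (nb V E x \<inter> nb V E y)"
    "card (V - {y}) + 1 = card V"
proof -
  note f = sg_facts[OF sg]
  have xy: "x \<noteq> y" using f(5) e by auto
  have xV: "x \<in> V" and yV: "y \<in> V" using f(2,3) e by auto
  show sgc: "simple_graph (V - {y}) (contr V E x y)"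
    using f(1) f(4) unfolding simple_graph_def contr_def by auto
  show "card (V - {y}) + 1 = card V"
    using card_Suc_Diff1[OF f(1) yV] by simp
  let ?G0 = "arcs (V - {y}) (delv E y)"
  let ?Gc = "arcs (V - {y}) (contr V E x y)"
  have a0: "card (arcs V E) \<le> card ?G0 + 2 * card (nb V E y)"
    using del_vertex(2)[OF sg yV] .
  have sg0: "simple_graph (V - {y}) (delv E y)" using del_vertex(1)[OF sg yV] .
  define Dd where "Dd = nb V E y - nb V E x - {x}"
  define X where "X = {x} \<times> Dd \<union> Dd \<times> {x}"
  have finDd: "finite Dd" unfolding Dd_def using finite_nb[OF sg] by auto
  have xD: "x \<notin> Dd" unfolding Dd_def by auto
  have cX: "card X = 2 * card Dd"
  proof -
    have "({x} \<times> Dd) \<inter> (Dd \<times> {x}) = {}" using xD by auto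
    then have "card X = card ({x} \<times> Dd) + card (Dd \<times> {x})"
      unfolding X_def using finDd by (intro card_Un_disjoint) auto
    then show ?thesis by (simp add: card_cartesian_product)
  qed
  have sub: "?G0 \<union> X \<subseteq> ?Gc"
  proof
    fix p assume "p \<in> ?G0 \<union> X"
    then show "p \<in> ?Gc"
    proof
      assume "p \<in> ?G0"
      then show ?thesis using f(5) unfolding arcs_def delv_def contr_def by auto
    next
      assume "p \<in> X"
      then show ?thesis using f(4,5) xV xy unfolding X_def Dd_def arcs_def contr_def nb_def by auto
    qed
  qed
  have disj: "?G0 \<inter> X = {}"
    using f(4) unfolding X_def Dd_def arcs_def delv_def nb_def by auto
  have "card ?G0 + card X = card (?G0 \<union> X)"
    using disj finite_arcs[OF sg0] finDd unfolding X_def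
    by (intro card_Un_disjoint[symmetric]) auto
  also have "\<dots> \<le> card ?Gc" using sub finite_arcs[OF sgc] by (intro card_mono) auto
  finally have a1: "card ?G0 + 2 * card Dd \<le> card ?Gc" using cX by simp
  have "nb V E y \<subseteq> Dd \<union> {x} \<union> (nb V E x \<inter> nb V E y)" unfolding Dd_def by auto
  then have "card (nb V E y) \<le> card (Dd \<union> {x} \<union> (nb V E x \<inter> nb V E y))"
    using finDd finite_nb[OF sg] by (intro card_mono) auto
  also have "\<dots> \<le> card (Dd \<union> {x}) + card (nb V E x \<inter> nb V E y)" by (rule card_Un_le)
  also have "card (Dd \<union> {x}) \<le> card Dd + card {x}" by (rule card_Un_le)
  finally have a2: "card (nb V E y) \<le> card Dd + 1 + card (nb V E x \<inter> nb V E y)" by simp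
  show "card (arcs V E) \<le> card ?Gc + 2 + 2 * card (nb V E x \<inter> nb V E y)"
    using a0 a1 a2 by linarith
qed

lemma contract_lift:
  assumes sg: "simple_graph V E" and e: "E x y"
    and H: "has_complete_minor (V - {y}) (contr V E x y) n"
  shows "has_complete_minor V E n"
proof -
  note f = sg_facts[OF sg]
  let ?Ec = "contr V E x y"
  obtain B where B1: "\<forall>i<n. B i \<noteq> {} \<and> B i \<subseteq> V - {y} \<and> connected_set ?Ec (B i)"
    and B2: "\<forall>i<n. \<forall>j<n. i \<noteq> j \<longrightarrow> B i \<inter> B j = {} \<and> (\<exists>a\<in>B i. \<exists>b\<in>B j. ?Ec a b)"
    using H unfolding has_complete_minor_def by blast
  define C where "C i = B i \<union> (if x \<in> B i then {y} else {})" for i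
  have yV: "y \<in> V" using f(3) e by auto
  have yB: "y \<notin> B i" if "i < n" for i using B1 that by auto
  have conn: "connected_set E (C i)" if i: "i < n" for i
  proof -
    define R' where "R' = (\<lambda>u v. ?Ec u v \<and> u \<in> B i \<and> v \<in> B i)"
    define R where "R = (\<lambda>u v. E u v \<and> u \<in> C i \<and> v \<in> C i)"
    have stepR: "R\<^sup>*\<^sup>* u v" if "R' u v" for u v
    proof -
      have uv: "u \<in> B i" "v \<in> B i" and ec: "?Ec u v" using that unfolding R'_def by auto
      then have uvC: "u \<in> C i" "v \<in> C i" unfolding C_def by auto
      from ec have "E u v \<or> (u = x \<and> E y v) \<or> (v = x \<and> E u y)" unfolding contr_def by auto
      then show ?thesis
      proof (elim disjE conjE)
        assume "E u v" then show ?thesis using uvC unfolding R_def by auto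
      next
        assume ux: "u = x" and "E y v"
        then have yC: "y \<in> C i" using uv unfolding C_def by auto
        have "R u y" "R y v" using ux e \<open>E y v\<close> uvC yC unfolding R_def by auto
        then show ?thesis by (meson rtranclp.rtrancl_into_rtrancl rtranclp.rtrancl_refl)
      next
        assume vx: "v = x" and "E u y"
        then have yC: "y \<in> C i" using uv unfolding C_def by auto
        have "R u y" "R y v" using vx f(4)[OF e] \<open>E u y\<close> uvC yC unfolding R_def by auto
        then show ?thesis by (meson rtranclp.rtrancl_into_rtrancl rtranclp.rtrancl_refl)
      qed
    qed
    have lift: "R\<^sup>*\<^sup>* a b" if "R'\<^sup>*\<^sup>* a b" for a b
      using that
    proof (induction rule: rtranclp_induct)
      case base then show ?case by simp
    next
      case (step b c) then show ?case using stepR[of b c] by (meson rtranclp_trans)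
    qed
    have inB: "R\<^sup>*\<^sup>* a b" if "a \<in> B i" "b \<in> B i" for a b
    proof -
      have "connected_set ?Ec (B i)" using B1 i by auto
      then have "R'\<^sup>*\<^sup>* a b" using that unfolding connected_set_def R'_def by blast
      then show ?thesis by (rule lift)
    qed
    show ?thesis unfolding connected_set_def
    proof (intro ballI)
      fix a b assume a: "a \<in> C i" and b: "b \<in> C i"
      show "(\<lambda>u v. E u v \<and> u \<in> C i \<and> v \<in> C i)\<^sup>*\<^sup>* a b"
      proof (cases "x \<in> B i")
        case True
        have yC: "y \<in> C i" and xC: "x \<in> C i" using True unfolding C_def by auto
        have Rxy: "R x y" "R y x" using e f(4)[OF e] xC yC unfolding R_def by auto
        have toX: "R\<^sup>*\<^sup>* c x \<and> R\<^sup>*\<^sup>* x c" if "c \<in> C i" for c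
        proof (cases "c = y")
          case True then show ?thesis using Rxy by auto
        next
          case False then have "c \<in> B i" using that unfolding C_def by (auto split: if_splits)
          then show ?thesis using inB \<open>x \<in> B i\<close> by auto
        qed
        have "R\<^sup>*\<^sup>* a b" using toX[OF a] toX[OF b] by (meson rtranclp_trans)
        then show ?thesis unfolding R_def .
      next
        case False
        then have "a \<in> B i" "b \<in> B i" using a b unfolding C_def by auto
        then have "R\<^sup>*\<^sup>* a b" by (rule inB)
        then show ?thesis unfolding R_def .
      qed
    qed
  qed
  show ?thesis unfolding has_complete_minor_def
  proof (intro exI[of _ C] conjI allI impI)
    fix i assume i: "i < n"
    show "C i \<noteq> {}" using B1 i unfolding C_def by auto
    show "C i \<subseteq> V" using B1 i yV unfolding C_def by auto
    show "connected_set E (C i)" using conn i .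
  next
    fix i j assume i: "i < n" and j: "j < n" and ij: "i \<noteq> j"
    have d: "B i \<inter> B j = {}" using B2 i j ij by auto
    show "C i \<inter> C j = {}" using d yB[OF i] yB[OF j] unfolding C_def by auto
    obtain a b where ab: "a \<in> B i" "b \<in> B j" "?Ec a b" using B2 i j ij by blast
    then have "E a b \<or> (a = x \<and> E y b) \<or> (b = x \<and> E a y)" unfolding contr_def by auto
    then show "\<exists>a\<in>C i. \<exists>b\<in>C j. E a b"
    proof (elim disjE conjE)
      assume "E a b" then show ?thesis using ab unfolding C_def by blast
    next
      assume "a = x" "E y b"
      then have "y \<in> C i" "b \<in> C j" using ab unfolding C_def by auto
      then show ?thesis using \<open>E y b\<close> by blast
    next
      assume "b = x" "E a y"
      then have "a \<in> C i" "y \<in> C j" using ab unfolding C_def by auto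
      then show ?thesis using \<open>E a y\<close> by blast
    qed
  qed
qed



lemma clique_minor':
  assumes "distinct vs" "set vs \<subseteq> V"
    "\<And>a b. a \<in> set vs \<Longrightarrow> b \<in> set vs \<Longrightarrow> a \<noteq> b \<Longrightarrow> E a b"
  shows "has_complete_minor V E (length vs)"
proof (rule clique_minor[OF assms(1,2)])
  fix i j assume "i < length vs" "j < length vs" "i \<noteq> j"
  moreover have "vs ! i \<noteq> vs ! j" using assms(1) calculation by (simp add: distinct_conv_nth)
  ultimately show "E (vs ! i) (vs ! j)" using assms(3) by auto
qed

lemma min_deg_vertex:
  assumes sg: "simple_graph V E" and "card (arcs V E) < k * card V"
  shows "\<exists>x\<in>V. card (nb V E x) < k"
proof (rule ccontr)
  assume "\<not> ?thesis"
  then have "(\<Sum>v\<in>V. k) \<le> (\<Sum>v\<in>V. card (nb V E v))" by (intro sum_mono) auto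
  then show False using assms card_arcs_sum[OF sg] by (simp add: mult.commute)
qed

theorem K4_bound:
  assumes "simple_graph V E" "\<not> has_complete_minor V E 4" "2 \<le> card V"
  shows "card (arcs V E) + 6 \<le> 4 * card V"
  using assms
proof (induction "card V" arbitrary: V E rule: less_induct)
  case less
  note IHo = less.hyps
  from less.prems show ?case
  proof (induction "card (arcs V E)" arbitrary: E rule: less_induct)
    case less
    have IHi: "\<And>E'. card (arcs V E') < card (arcs V E) \<Longrightarrow> simple_graph V E' \<Longrightarrow>
        \<not> has_complete_minor V E' 4 \<Longrightarrow> card (arcs V E') + 6 \<le> 4 * card V"
      using less.hyps less.prems(3) by blast
    note sg = less.prems(1) and nom = less.prems(2) and n2 = less.prems(3)
    note f = sg_facts[OF sg]
    show ?case
    proof (rule ccontr)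
      assume neg: "\<not> card (arcs V E) + 6 \<le> 4 * card V"
      have sq: "card (arcs V E) \<le> card V * (card V - 1)" by (rule arcs_le_sq[OF sg])
      have n4: "card V \<ge> 4"
      proof (rule ccontr)
        assume "\<not> card V \<ge> 4"
        then have "card V = 2 \<or> card V = 3" using n2 by auto
        then show False using sq neg by auto
      qed
      have "arcs V E \<noteq> {}" using neg n4 by (auto simp: card_eq_0_iff)
      then obtain x0 y0 where e0: "E x0 y0" unfolding arcs_def by auto
      show False
      proof (cases "card (arcs V E) + 4 > 4 * card V")
        case True
        note d = del_edge[OF sg e0]
        have "\<not> has_complete_minor V (dele E x0 y0) 4"
        proof
          assume "has_complete_minor V (dele E x0 y0) 4"
          then have "has_complete_minor V E 4" by (rule minor_mono) (auto simp: dele_def)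
          then show False using nom by simp
        qed
        then have "card (arcs V (dele E x0 y0)) + 6 \<le> 4 * card V"
          using IHi[OF _ d(1)] d(2) by simp
        then show False using True d(2) by linarith
      next
        case False
        have deg: "3 \<le> card (nb V E v)" if vV: "v \<in> V" for v
        proof -
          note d = del_vertex[OF sg vV]
          have "\<not> has_complete_minor (V - {v}) (delv E v) 4"
          proof
            assume "has_complete_minor (V - {v}) (delv E v) 4"
            then have "has_complete_minor V E 4" by (rule minor_mono) (auto simp: delv_def)
            then show False using nom by simp
          qed
          then have "card (arcs (V - {v}) (delv E v)) + 6 \<le> 4 * card (V - {v})"
            using IHo[OF _ d(1)] d(3) n4 by simp
          then show ?thesis using d(2) d(3) neg by linarith
        qed
        have tri: "2 \<le> card (nb V E u \<inter> nb V E w)" if euw: "E u w" for u w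
        proof -
          note c = contract[OF sg euw]
          have "\<not> has_complete_minor (V - {w}) (contr V E u w) 4"
            using nom contract_lift[OF sg euw] by blast
          then have "card (arcs (V - {w}) (contr V E u w)) + 6 \<le> 4 * card (V - {w})"
            using IHo[OF _ c(1)] c(3) n4 by simp
          then show ?thesis using c(2) c(3) neg by linarith
        qed
        obtain x where xV: "x \<in> V" and dx: "card (nb V E x) < 4"
          using min_deg_vertex[OF sg, of 4] False by auto
        let ?N = "nb V E x"
        have c3: "card ?N = 3" using deg[OF xV] dx by simp
        have finN: "finite ?N" by (rule finite_nb[OF sg])
        have adj: "E u w" if "u \<in> ?N" "w \<in> ?N" "u \<noteq> w" for u w
        proof (rule ccontr)
          assume nuw: "\<not> E u w"
          have exu: "E x u" using that unfolding nb_def by auto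
          have "?N \<inter> nb V E u \<subseteq> ?N - {u, w}" using nuw f(5) unfolding nb_def by auto
          then have "card (?N \<inter> nb V E u) \<le> card (?N - {u, w})" using finN by (intro card_mono) auto
          also have "card (?N - {u, w}) = 1"
            using that c3 finN by (subst card_Diff_subset) auto
          finally show False using tri[OF exu] by simp
        qed
        have "\<exists>p q r. ?N = {p, q, r} \<and> p \<noteq> q \<and> q \<noteq> r \<and> p \<noteq> r"
          using c3 by (simp only: card_3_iff)
        then obtain p q r where pqr: "?N = {p, q, r}" "p \<noteq> q" "q \<noteq> r" "p \<noteq> r"
          by blast
        have xN: "x \<notin> ?N" using f(5) unfolding nb_def by auto
        have NV: "?N \<subseteq> V" unfolding nb_def by auto
        have "has_complete_minor V E (length [x, p, q, r])"
        proof (rule clique_minor')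
          show "distinct [x, p, q, r]" using pqr xN by auto
          show "set [x, p, q, r] \<subseteq> V" using pqr NV xV by auto
          fix a b assume "a \<in> set [x, p, q, r]" "b \<in> set [x, p, q, r]" "a \<noteq> b"
          then have "a \<in> insert x ?N" "b \<in> insert x ?N" using pqr by auto
          then have ha: "a = x \<or> a \<in> ?N" and hb: "b = x \<or> b \<in> ?N" by auto
          show "E a b"
          proof (cases "a = x")
            case True
            then have "b \<in> ?N" using hb \<open>a \<noteq> b\<close> by auto
            then show ?thesis using True by (simp add: nb_def)
          next
            case False
            then have aN: "a \<in> ?N" using ha by auto
            show ?thesis
            proof (cases "b = x")
              case True
              have "E x a" using aN by (simp add: nb_def)
              then show ?thesis using True f(4) by blast
            next
              case False
              then have "b \<in> ?N" using hb by auto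
              then show ?thesis using adj aN \<open>a \<noteq> b\<close> by blast
            qed
          qed
        qed
        moreover have "length [x, p, q, r] = (4::nat)" by simp
        ultimately show False using nom by metis
      qed
    qed
  qed
qed


theorem K5_bound:
  assumes "simple_graph V E" "\<not> has_complete_minor V E 5" "3 \<le> card V"
  shows "card (arcs V E) + 12 \<le> 6 * card V"
  using assms
proof (induction "card V" arbitrary: V E rule: less_induct)
  case less
  note IHo = less.hyps
  from less.prems show ?case
  proof (induction "card (arcs V E)" arbitrary: E rule: less_induct)
    case less
    have IHi: "\<And>E'. card (arcs V E') < card (arcs V E) \<Longrightarrow> simple_graph V E' \<Longrightarrow>
        \<not> has_complete_minor V E' 5 \<Longrightarrow> card (arcs V E') + 12 \<le> 6 * card V"
      using less.hyps less.prems(3) by blast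
    note sg = less.prems(1) and nom = less.prems(2) and n3 = less.prems(3)
    note f = sg_facts[OF sg]
    show ?case
    proof (rule ccontr)
      assume neg: "\<not> card (arcs V E) + 12 \<le> 6 * card V"
      have sq: "card (arcs V E) \<le> card V * (card V - 1)" by (rule arcs_le_sq[OF sg])
      have n5: "card V \<ge> 5"
      proof (rule ccontr)
        assume "\<not> card V \<ge> 5"
        then have "card V = 3 \<or> card V = 4" using n3 by auto
        then show False using sq neg by auto
      qed
      have "arcs V E \<noteq> {}" using neg n5 by (auto simp: card_eq_0_iff)
      then obtain x0 y0 where e0: "E x0 y0" unfolding arcs_def by auto
      show False
      proof (cases "card (arcs V E) + 10 > 6 * card V")
        case True
        note d = del_edge[OF sg e0]
        have "\<not> has_complete_minor V (dele E x0 y0) 5"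
        proof
          assume "has_complete_minor V (dele E x0 y0) 5"
          then have "has_complete_minor V E 5" by (rule minor_mono) (auto simp: dele_def)
          then show False using nom by simp
        qed
        then have "card (arcs V (dele E x0 y0)) + 12 \<le> 6 * card V"
          using IHi[OF _ d(1)] d(2) by simp
        then show False using True d(2) by linarith
      next
        case False
        have deg: "4 \<le> card (nb V E v)" if vV: "v \<in> V" for v
        proof -
          note d = del_vertex[OF sg vV]
          have "\<not> has_complete_minor (V - {v}) (delv E v) 5"
          proof
            assume "has_complete_minor (V - {v}) (delv E v) 5"
            then have "has_complete_minor V E 5" by (rule minor_mono) (auto simp: delv_def)
            then show False using nom by simp
          qed
          then have "card (arcs (V - {v}) (delv E v)) + 12 \<le> 6 * card (V - {v})"
            using IHo[OF _ d(1)] d(3) n5 by simp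
          then show ?thesis using d(2) d(3) neg by linarith
        qed
        have tri: "3 \<le> card (nb V E u \<inter> nb V E w)" if euw: "E u w" for u w
        proof -
          note c = contract[OF sg euw]
          have "\<not> has_complete_minor (V - {w}) (contr V E u w) 5"
            using nom contract_lift[OF sg euw] by blast
          then have "card (arcs (V - {w}) (contr V E u w)) + 12 \<le> 6 * card (V - {w})"
            using IHo[OF _ c(1)] c(3) n5 by simp
          then show ?thesis using c(2) c(3) neg by linarith
        qed
        obtain x where xV: "x \<in> V" and dx: "card (nb V E x) < 6"
          using min_deg_vertex[OF sg, of 6] False by auto
        let ?N = "nb V E x"
        have finN: "finite ?N" by (rule finite_nb[OF sg])
        have NV: "?N \<subseteq> V" unfolding nb_def by auto
        have sgH: "simple_graph ?N (ind E ?N)" by (rule sg_ind[OF sg NV])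
        have nomH: "\<not> has_complete_minor ?N (ind E ?N) 4"
        proof
          assume "has_complete_minor ?N (ind E ?N) 4"
          then have "has_complete_minor V E (Suc 4)" by (rule cone_minor[OF sg xV])
          then show False using nom by simp
        qed
        have "card (arcs ?N (ind E ?N)) + 6 \<le> 4 * card ?N"
          using K4_bound[OF sgH nomH] deg[OF xV] by simp
        moreover have "3 * card ?N \<le> card (arcs ?N (ind E ?N))"
        proof -
          have "(\<Sum>p\<in>?N. 3) \<le> (\<Sum>p\<in>?N. card (nb ?N (ind E ?N) p))"
          proof (rule sum_mono)
            fix p assume pN: "p \<in> ?N"
            then have "E x p" by (simp add: nb_def)
            have "nb ?N (ind E ?N) p = ?N \<inter> nb V E p"
              using pN unfolding nb_def ind_def by auto
            then show "3 \<le> card (nb ?N (ind E ?N) p)" using tri[OF \<open>E x p\<close>] by simp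
          qed
          then show ?thesis using card_arcs_sum[OF sgH] by (simp add: mult.commute)
        qed
        ultimately show False using dx by linarith
      qed
    qed
  qed
qed

theorem corollary2:
  fixes V :: "'a set" and E :: "'a \<Rightarrow> 'a \<Rightarrow> bool"
  assumes "simple_graph V E"
    and "\<not> has_complete_minor V E 5"
  shows "kd_choosable V E 4 1 TYPE('c)"
proof (rule sparse_choosable[OF assms(1)])
  show "\<forall>S\<subseteq>V. card {(a,b). a\<in>S \<and> b\<in>S \<and> E a b} \<le> 6 * card S"
  proof (intro allI impI)
    fix S assume SV: "S \<subseteq> V"
    have eq: "{(a,b). a\<in>S \<and> b\<in>S \<and> E a b} = arcs S (ind E S)"
      unfolding arcs_def ind_def by auto
    have sgS: "simple_graph S (ind E S)" by (rule sg_ind[OF assms(1) SV])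
    have nomS: "\<not> has_complete_minor S (ind E S) 5"
    proof
      assume "has_complete_minor S (ind E S) 5"
      then have "has_complete_minor V E 5" by (rule minor_mono) (use SV in \<open>auto simp: ind_def\<close>)
      then show False using assms(2) by simp
    qed
    show "card {(a,b). a\<in>S \<and> b\<in>S \<and> E a b} \<le> 6 * card S"
    proof (cases "3 \<le> card S")
      case True
      then show ?thesis using K5_bound[OF sgS nomS] eq by simp
    next
      case False
      then have "card S = 0 \<or> card S = 1 \<or> card S = 2" by auto
      moreover have "card (arcs S (ind E S)) \<le> card S * (card S - 1)" by (rule arcs_le_sq[OF sgS])
      ultimately show ?thesis using eq by auto
    qed
  qed
qed


end
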